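(* Let $(X,\sigma,\tau)$ be a separable, chronologically dense Lorentzian metric space satisfying the S-property. Then for all $(P,F),(P',F')\in\overline{X}$, $$\overline{\tau}((P,F),(P',F'))>0\iff F\cap P'\neq\emptyset.$$
   Context: A Lorentzian metric space $(X,\sigma,\tau)$ is a topological space with $\tau:X\times X\to[0,\infty]$ lower semicontinuous and satisfying $\tau(x,z)\geq\tau(x,y)+\tau(y,z)$ whenever $\tau(x,y),\tau(y,z)>0$. Write $x\ll y$ iff $\tau(x,y)>0$, $I^+(x)=\{y:x\ll y\}$, $I^-(x)=\{y:y\ll x\}$, $I^\pm[A]=\bigcup_{a\in A}I^\pm(a)$. Future (resp. past) chain: $x_n\ll x_{n+1}$ (resp. $x_{n+1}\ll x_n$) for all $n$. Separable: there is a countable $S$ with $x\ll y\Rightarrow\exists s\in S$, $x\ll s\ll y$. Chronologically dense: every $x$ with $I^-(x)\neq\emptyset$ (resp. $I^+(x)\neq\emptyset$) is the $\sigma$-limit of a future (resp. past) chain. Past set: $P=I^-[P]$; $\downarrow S=I^-[\{p:p\ll q\ \forall q\in S\}]$; IP: past set not the union of two proper past subsets; PIP: IP of the form $I^-(p)$; future sets, $\uparrow S$, IF, PIF dually. For nonempty IP $P$ and IF $F$, $P\sim_S F$ iff $P$ is a maximal IP in $\downarrow F$ and $F$ a maximal IF in $\uparrow P$; $P\sim_S\emptyset$ (resp. $\emptyset\sim_S F$) if the nonempty $P$ (resp. $F$) is S-related to no nonempty IF (resp. IP). S-property: for every $x$, $I^-(x)\sim_S I^+(x)$, and no PIF other than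 $I^+(x)$ (resp. PIP other than $I^-(x)$) is S-related to $I^-(x)$ (resp. $I^+(x)$). c-completion $\overline X=\{(P,F):P\sim_S F\}$. $\overline\tau((P,F),(P',F'))=0$ if $F=\emptyset$ or $P'=\emptyset$, and otherwise $\lim_n\tau(q_n,p'_n)$ for any past chain $\{q_n\}$ with $I^+[\{q_n\}]=F$ and any future chain $\{p'_n\}$ with $I^-[\{p'_n\}]=P'$ (well defined). *)

theory Defs
  imports "HOL-Analysis.Analysis" "HOL-Library.Extended_Nonnegative_Real"
begin

definition lorentzian_metric_space :: "'a topology \<Rightarrow> ('a \<Rightarrow> 'a \<Rightarrow> ennreal) \<Rightarrow> bool" where
  "lorentzian_metric_space \<sigma> \<tau> \<longleftrightarrow>
     topspace \<sigma> = UNIV \<and>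
     (\<forall>c. openin (prod_topology \<sigma> \<sigma>) {z. c < \<tau> (fst z) (snd z)}) \<and>
     (\<forall>x y z. \<tau> x y > 0 \<and> \<tau> y z > 0 \<longrightarrow> \<tau> x z \<ge> \<tau> x y + \<tau> y z)"

definition chron :: "('a \<Rightarrow> 'a \<Rightarrow> ennreal) \<Rightarrow> 'a \<Rightarrow> 'a \<Rightarrow> bool" where
  "chron \<tau> x y \<longleftrightarrow> \<tau> x y > 0"

definition Ifut :: "('a \<Rightarrow> 'a \<Rightarrow> ennreal) \<Rightarrow> 'a \<Rightarrow> 'a set" where
  "Ifut \<tau> x = {y. chron \<tau> x y}"

definition Ipast :: "('a \<Rightarrow> 'a \<Rightarrow> ennreal) \<Rightarrow> 'a \<Rightarrow> 'a set" where
  "Ipast \<tau> x = {y. chron \<tau> y x}"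

definition IfutS :: "('a \<Rightarrow> 'a \<Rightarrow> ennreal) \<Rightarrow> 'a set \<Rightarrow> 'a set" where
  "IfutS \<tau> A = (\<Union>a\<in>A. Ifut \<tau> a)"

definition IpastS :: "('a \<Rightarrow> 'a \<Rightarrow> ennreal) \<Rightarrow> 'a set \<Rightarrow> 'a set" where
  "IpastS \<tau> A = (\<Union>a\<in>A. Ipast \<tau> a)"

definition future_chain :: "('a \<Rightarrow> 'a \<Rightarrow> ennreal) \<Rightarrow> (nat \<Rightarrow> 'a) \<Rightarrow> bool" where
  "future_chain \<tau> s \<longleftrightarrow> (\<forall>n. chron \<tau> (s n) (s (Suc n)))"

definition past_chain :: "('a \<Rightarrow> 'a \<Rightarrow> ennreal) \<Rightarrow> (nat \<Rightarrow> 'a) \<Rightarrow> bool" where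
  "past_chain \<tau> s \<longleftrightarrow> (\<forall>n. chron \<tau> (s (Suc n)) (s n))"

definition lms_separable :: "('a \<Rightarrow> 'a \<Rightarrow> ennreal) \<Rightarrow> bool" where
  "lms_separable \<tau> \<longleftrightarrow>
     (\<exists>S. countable S \<and> (\<forall>x y. chron \<tau> x y \<longrightarrow> (\<exists>s\<in>S. chron \<tau> x s \<and> chron \<tau> s y)))"

definition chron_dense :: "'a topology \<Rightarrow> ('a \<Rightarrow> 'a \<Rightarrow> ennreal) \<Rightarrow> bool" where
  "chron_dense \<sigma> \<tau> \<longleftrightarrow>
     (\<forall>x. (Ipast \<tau> x \<noteq> {} \<longrightarrow> (\<exists>s. future_chain \<tau> s \<and> limitin \<sigma> s x sequentially)) \<and>
          (Ifut \<tau> x \<noteq> {} \<longrightarrow> (\<exists>s. past_chain \<tau> s \<and> limitin \<sigma> s x sequentially)))"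

definition past_set :: "('a \<Rightarrow> 'a \<Rightarrow> ennreal) \<Rightarrow> 'a set \<Rightarrow> bool" where
  "past_set \<tau> P \<longleftrightarrow> P = IpastS \<tau> P"

definition future_set :: "('a \<Rightarrow> 'a \<Rightarrow> ennreal) \<Rightarrow> 'a set \<Rightarrow> bool" where
  "future_set \<tau> F \<longleftrightarrow> F = IfutS \<tau> F"

definition down :: "('a \<Rightarrow> 'a \<Rightarrow> ennreal) \<Rightarrow> 'a set \<Rightarrow> 'a set" where
  "down \<tau> S = IpastS \<tau> {p. \<forall>q\<in>S. chron \<tau> p q}"

definition up :: "('a \<Rightarrow> 'a \<Rightarrow> ennreal) \<Rightarrow> 'a set \<Rightarrow> 'a set" where
  "up \<tau> S = IfutS \<tau> {p. \<forall>q\<in>S. chron \<tau> q p}"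

definition IP :: "('a \<Rightarrow> 'a \<Rightarrow> ennreal) \<Rightarrow> 'a set \<Rightarrow> bool" where
  "IP \<tau> P \<longleftrightarrow> past_set \<tau> P \<and>
     \<not> (\<exists>A B. past_set \<tau> A \<and> past_set \<tau> B \<and> A \<subset> P \<and> B \<subset> P \<and> P = A \<union> B)"

definition IF :: "('a \<Rightarrow> 'a \<Rightarrow> ennreal) \<Rightarrow> 'a set \<Rightarrow> bool" where
  "IF \<tau> F \<longleftrightarrow> future_set \<tau> F \<and>
     \<not> (\<exists>A B. future_set \<tau> A \<and> future_set \<tau> B \<and> A \<subset> F \<and> B \<subset> F \<and> F = A \<union> B)"

definition PIP :: "('a \<Rightarrow> 'a \<Rightarrow> ennreal) \<Rightarrow> 'a set \<Rightarrow> bool" where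
  "PIP \<tau> P \<longleftrightarrow> IP \<tau> P \<and> (\<exists>p. P = Ipast \<tau> p)"

definition PIF :: "('a \<Rightarrow> 'a \<Rightarrow> ennreal) \<Rightarrow> 'a set \<Rightarrow> bool" where
  "PIF \<tau> F \<longleftrightarrow> IF \<tau> F \<and> (\<exists>p. F = Ifut \<tau> p)"

definition Srel_ne :: "('a \<Rightarrow> 'a \<Rightarrow> ennreal) \<Rightarrow> 'a set \<Rightarrow> 'a set \<Rightarrow> bool" where
  "Srel_ne \<tau> P F \<longleftrightarrow> P \<noteq> {} \<and> F \<noteq> {} \<and> IP \<tau> P \<and> IF \<tau> F \<and>
     P \<subseteq> down \<tau> F \<and> \<not> (\<exists>P'. IP \<tau> P' \<and> P \<subset> P' \<and> P' \<subseteq> down \<tau> F) \<and>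
     F \<subseteq> up \<tau> P \<and> \<not> (\<exists>F'. IF \<tau> F' \<and> F \<subset> F' \<and> F' \<subseteq> up \<tau> P)"

definition Srel :: "('a \<Rightarrow> 'a \<Rightarrow> ennreal) \<Rightarrow> 'a set \<Rightarrow> 'a set \<Rightarrow> bool" where
  "Srel \<tau> P F \<longleftrightarrow>
     (if P \<noteq> {} \<and> F \<noteq> {} then Srel_ne \<tau> P F
      else if P \<noteq> {} then IP \<tau> P \<and> \<not> (\<exists>F'. Srel_ne \<tau> P F')
      else if F \<noteq> {} then IF \<tau> F \<and> \<not> (\<exists>P'. Srel_ne \<tau> P' F)
      else False)"

definition S_property :: "('a \<Rightarrow> 'a \<Rightarrow> ennreal) \<Rightarrow> bool" where
  "S_property \<tau> \<longleftrightarrow>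
     (\<forall>x. Srel \<tau> (Ipast \<tau> x) (Ifut \<tau> x) \<and>
          (\<forall>F. PIF \<tau> F \<and> Srel \<tau> (Ipast \<tau> x) F \<longrightarrow> F = Ifut \<tau> x) \<and>
          (\<forall>P. PIP \<tau> P \<and> Srel \<tau> P (Ifut \<tau> x) \<longrightarrow> P = Ipast \<tau> x))"

definition c_completion :: "('a \<Rightarrow> 'a \<Rightarrow> ennreal) \<Rightarrow> ('a set \<times> 'a set) set" where
  "c_completion \<tau> = {(P, F). Srel \<tau> P F}"

text \<open>Extended time separation: computed along some (chosen) past chain generating F and
  some (chosen) future chain generating P'; the paper shows the value is independent of
  the choice.\<close>
definition tau_bar :: "('a \<Rightarrow> 'a \<Rightarrow> ennreal) \<Rightarrow> ('a set \<times> 'a set) \<Rightarrow> ('a set \<times> 'a set) \<Rightarrow> ennreal" where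
  "tau_bar \<tau> PF PF' =
     (let F = snd PF; P' = fst PF' in
      if F = {} \<or> P' = {} then 0
      else (let q = (SOME q. past_chain \<tau> q \<and> IfutS \<tau> (range q) = F);
                p = (SOME p. future_chain \<tau> p \<and> IpastS \<tau> (range p) = P')
            in lim (\<lambda>n. \<tau> (q n) (p n))))"

end

theory Submission
  imports Defs
begin

lemma IF_chain:
  assumes trans: "\<And>x y z. chron \<tau> x y \<Longrightarrow> chron \<tau> y z \<Longrightarrow> chron \<tau> x z"
    and cS: "countable S"
    and interp: "\<And>x y. chron \<tau> x y \<Longrightarrow> \<exists>s\<in>S. chron \<tau> x s \<and> chron \<tau> s y"
    and IFF: "IF \<tau> F" and ne: "F \<noteq> {}"
  shows "\<exists>q. past_chain \<tau> q \<and> IfutS \<tau> (range q) = F"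
proof -
  have fs: "future_set \<tau> F" using IFF unfolding IF_def by blast
  have Fut: "\<And>x. x \<in> F \<longleftrightarrow> (\<exists>a\<in>F. chron \<tau> a x)"
  proof -
    fix x
    have "F = IfutS \<tau> F" using fs unfolding future_set_def .
    then show "x \<in> F \<longleftrightarrow> (\<exists>a\<in>F. chron \<tau> a x)"
      unfolding IfutS_def Ifut_def by blast
  qed
  have futI: "\<And>A. future_set \<tau> (IfutS \<tau> A)"
  proof -
    fix A
    show "future_set \<tau> (IfutS \<tau> A)"
      unfolding future_set_def IfutS_def Ifut_def
    proof (rule set_eqI, rule iffI)
      fix y assume "y \<in> (\<Union>a\<in>A. {y. chron \<tau> a y})"
      then obtain a where a: "a \<in> A" "chron \<tau> a y" by blast
      then obtain s where "chron \<tau> a s" "chron \<tau> s y" using interp by blast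
      then show "y \<in> (\<Union>a\<in>\<Union>a\<in>A. {y. chron \<tau> a y}. {y. chron \<tau> a y})" using a by blast
    next
      fix y assume "y \<in> (\<Union>a\<in>\<Union>a\<in>A. {y. chron \<tau> a y}. {y. chron \<tau> a y})"
      then show "y \<in> (\<Union>a\<in>A. {y. chron \<tau> a y})" using trans by blast
    qed
  qed
  have dir: "\<exists>z\<in>F. chron \<tau> z x \<and> chron \<tau> z y" if xF: "x \<in> F" and yF: "y \<in> F" for x y
  proof -
    define F1 where "F1 = IfutS \<tau> (F \<inter> Ipast \<tau> x)"
    define F2 where "F2 = IfutS \<tau> (F - Ipast \<tau> x)"
    have U: "F = F1 \<union> F2" using Fut unfolding F1_def F2_def IfutS_def Ifut_def by blast
    have s1: "F1 \<subseteq> F" using Fut unfolding F1_def IfutS_def Ifut_def by blast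
    have s2: "F2 \<subseteq> F" using Fut unfolding F2_def IfutS_def Ifut_def by blast
    have "\<not> (F1 \<subset> F \<and> F2 \<subset> F)"
      using IFF futI[of "F \<inter> Ipast \<tau> x"] futI[of "F - Ipast \<tau> x"] U
      unfolding IF_def F1_def[symmetric] F2_def[symmetric] by blast
    then have "F1 = F \<or> F2 = F" using s1 s2 by blast
    moreover have "x \<notin> F2" unfolding F2_def IfutS_def Ifut_def Ipast_def by blast
    ultimately have "y \<in> F1" using xF yF by blast
    then show ?thesis unfolding F1_def IfutS_def Ifut_def Ipast_def by blast
  qed
  define T where "T = S \<inter> F"
  obtain x0 where "x0 \<in> F" using ne by blast
  then obtain a0 where a0: "a0 \<in> F" "chron \<tau> a0 x0" using Fut by blast
  then obtain s0 where "s0 \<in> S" "chron \<tau> a0 s0" using interp by blast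
  then have "s0 \<in> T" using Fut a0 unfolding T_def by blast
  then have Tne: "T \<noteq> {}" by blast
  have cT: "countable T" using cS unfolding T_def by simp
  define e where "e = from_nat_into T"
  have eT: "\<And>n. e n \<in> T" unfolding e_def using Tne by (simp add: from_nat_into)
  have Te: "\<And>t. t \<in> T \<Longrightarrow> \<exists>n. e n = t" unfolding e_def using cT
    by (metis from_nat_into_to_nat_on)
  have eF: "\<And>n. e n \<in> F" using eT unfolding T_def by blast
  define q where "q = rec_nat (SOME z. z \<in> F \<and> chron \<tau> z (e 0))
      (\<lambda>n qn. SOME z. z \<in> F \<and> chron \<tau> z qn \<and> chron \<tau> z (e (Suc n)))"
  have q0: "q 0 = (SOME z. z \<in> F \<and> chron \<tau> z (e 0))" unfolding q_def by simp
  have qS: "\<And>n. q (Suc n) = (SOME z. z \<in> F \<and> chron \<tau> z (q n) \<and> chron \<tau> z (e (Suc n)))"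
    unfolding q_def by simp
  have P: "\<forall>n. q n \<in> F \<and> chron \<tau> (q n) (e n) \<and> chron \<tau> (q (Suc n)) (q n)"
  proof
    fix n
    have A: "q n \<in> F \<and> chron \<tau> (q n) (e n)"
    proof (induction n)
      case 0
      have "\<exists>z. z \<in> F \<and> chron \<tau> z (e 0)" using Fut eF by blast
      then show ?case unfolding q0 by (rule someI_ex)
    next
      case (Suc n)
      have "\<exists>z. z \<in> F \<and> chron \<tau> z (q n) \<and> chron \<tau> z (e (Suc n))"
        using dir[of "q n" "e (Suc n)"] Suc eF by blast
      then show ?case unfolding qS by (smt (verit, ccfv_threshold) someI_ex)
    qed
    have "\<exists>z. z \<in> F \<and> chron \<tau> z (q n) \<and> chron \<tau> z (e (Suc n))"
      using dir[of "q n" "e (Suc n)"] A eF by blast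
    then have "chron \<tau> (q (Suc n)) (q n)" unfolding qS by (smt (verit, ccfv_threshold) someI_ex)
    then show "q n \<in> F \<and> chron \<tau> (q n) (e n) \<and> chron \<tau> (q (Suc n)) (q n)" using A by blast
  qed
  have "past_chain \<tau> q" unfolding past_chain_def using P by blast
  moreover have "IfutS \<tau> (range q) = F"
  proof
    show "IfutS \<tau> (range q) \<subseteq> F" using P Fut unfolding IfutS_def Ifut_def by blast
  next
    show "F \<subseteq> IfutS \<tau> (range q)"
    proof
      fix x assume "x \<in> F"
      then obtain a where a: "a \<in> F" "chron \<tau> a x" using Fut by blast
      then obtain s where s: "s \<in> S" "chron \<tau> a s" "chron \<tau> s x" using interp by blast
      then have "s \<in> T" using a Fut unfolding T_def by blast
      then obtain k where k: "e k = s" using Te by blast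
      have "chron \<tau> (q k) x" using P k s trans by blast
      then show "x \<in> IfutS \<tau> (range q)" unfolding IfutS_def Ifut_def by blast
    qed
  qed
  ultimately show ?thesis by blast
qed

lemma flip_IF: "IF (\<lambda>x y. \<tau> y x) P = IP \<tau> P"
  unfolding IF_def future_set_def IfutS_def Ifut_def chron_def IP_def past_set_def IpastS_def Ipast_def
  by simp

lemma flip_IfutS: "IfutS (\<lambda>x y. \<tau> y x) A = IpastS \<tau> A"
  unfolding IfutS_def Ifut_def chron_def IpastS_def Ipast_def by simp

lemma flip_chain: "past_chain (\<lambda>x y. \<tau> y x) q = future_chain \<tau> q"
  unfolding past_chain_def future_chain_def chron_def by simp

lemma IP_chain:
  assumes trans: "\<And>x y z. chron \<tau> x y \<Longrightarrow> chron \<tau> y z \<Longrightarrow> chron \<tau> x z"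
    and cS: "countable S"
    and interp: "\<And>x y. chron \<tau> x y \<Longrightarrow> \<exists>s\<in>S. chron \<tau> x s \<and> chron \<tau> s y"
    and IPP: "IP \<tau> P" and ne: "P \<noteq> {}"
  shows "\<exists>p. future_chain \<tau> p \<and> IpastS \<tau> (range p) = P"
proof -
  have "\<exists>q. past_chain (\<lambda>x y. \<tau> y x) q \<and> IfutS (\<lambda>x y. \<tau> y x) (range q) = P"
  proof (rule IF_chain[OF _ cS])
    show "chron (\<lambda>x y. \<tau> y x) x z" if "chron (\<lambda>x y. \<tau> y x) x y" "chron (\<lambda>x y. \<tau> y x) y z" for x y z
      using trans that unfolding chron_def by blast
    show "\<exists>s\<in>S. chron (\<lambda>x y. \<tau> y x) x s \<and> chron (\<lambda>x y. \<tau> y x) s y" if "chron (\<lambda>x y. \<tau> y x) x y" for x y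
      using interp that unfolding chron_def by blast
    show "IF (\<lambda>x y. \<tau> y x) P" using IPP flip_IF by metis
    show "P \<noteq> {}" by fact
  qed
  then show ?thesis using flip_IfutS flip_chain by metis
qed

theorem mainTheorem16:
  fixes \<sigma> :: "'a topology" and \<tau> :: "'a \<Rightarrow> 'a \<Rightarrow> ennreal"
  assumes "lorentzian_metric_space \<sigma> \<tau>"
    and "lms_separable \<tau>"
    and "chron_dense \<sigma> \<tau>"
    and "S_property \<tau>"
    and "(P, F) \<in> c_completion \<tau>"
    and "(P', F') \<in> c_completion \<tau>"
  shows "tau_bar \<tau> (P, F) (P', F') > 0 \<longleftrightarrow> F \<inter> P' \<noteq> {}"
proof -
  have rt: "\<And>x y z. \<tau> x y > 0 \<Longrightarrow> \<tau> y z > 0 \<Longrightarrow> \<tau> x z \<ge> \<tau> x y + \<tau> y z"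
    using assms(1) unfolding lorentzian_metric_space_def by blast
  have rt1: "\<tau> x z \<ge> \<tau> x y" "\<tau> x z \<ge> \<tau> y z" if "\<tau> x y > 0" "\<tau> y z > 0" for x y z
    using rt[OF that] by (auto intro: order_trans[OF _ rt[OF that]] simp: add_increasing add_increasing2)
  have trans: "\<And>x y z. chron \<tau> x y \<Longrightarrow> chron \<tau> y z \<Longrightarrow> chron \<tau> x z"
    unfolding chron_def using rt1 by (meson less_le_trans)
  obtain S where cS: "countable S" and interp: "\<And>x y. chron \<tau> x y \<Longrightarrow> \<exists>s\<in>S. chron \<tau> x s \<and> chron \<tau> s y"
    using assms(2) unfolding lms_separable_def by blast
  show ?thesis
  proof (cases "F = {} \<or> P' = {}")
    case True
    then show ?thesis unfolding tau_bar_def by auto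
  next
    case False
    then have Fne: "F \<noteq> {}" and Pne: "P' \<noteq> {}" by auto
    have IFF: "IF \<tau> F" using assms(5) Fne unfolding c_completion_def Srel_def Srel_ne_def
      by (auto split: if_splits)
    have IPP: "IP \<tau> P'" using assms(6) Pne unfolding c_completion_def Srel_def Srel_ne_def
      by (auto split: if_splits)
    define q where "q = (SOME q. past_chain \<tau> q \<and> IfutS \<tau> (range q) = F)"
    define p where "p = (SOME p. future_chain \<tau> p \<and> IpastS \<tau> (range p) = P')"
    have "\<exists>q. past_chain \<tau> q \<and> IfutS \<tau> (range q) = F"
      using IF_chain[OF trans cS interp IFF Fne] .
    then have q: "past_chain \<tau> q" "IfutS \<tau> (range q) = F" unfolding q_def by (metis (mono_tags, lifting) someI_ex)+
    have "\<exists>p. future_chain \<tau> p \<and> IpastS \<tau> (range p) = P'"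
      using IP_chain[OF trans cS interp IPP Pne] .
    then have p: "future_chain \<tau> p" "IpastS \<tau> (range p) = P'" unfolding p_def by (metis (mono_tags, lifting) someI_ex)+
    have tb: "tau_bar \<tau> (P, F) (P', F') = lim (\<lambda>n. \<tau> (q n) (p n))"
      using False unfolding tau_bar_def q_def p_def Let_def by simp
    have qc: "\<And>n. \<tau> (q (Suc n)) (q n) > 0" using q(1) unfolding past_chain_def chron_def by blast
    have pc: "\<And>n. \<tau> (p n) (p (Suc n)) > 0" using p(1) unfolding future_chain_def chron_def by blast
    have inc: "incseq (\<lambda>n. \<tau> (q n) (p n))"
    proof (rule incseq_SucI)
      fix n
      show "\<tau> (q n) (p n) \<le> \<tau> (q (Suc n)) (p (Suc n))"
      proof (cases "\<tau> (q n) (p n) > 0")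
        case True
        have a: "\<tau> (q (Suc n)) (p n) \<ge> \<tau> (q n) (p n)" using rt1(2)[OF qc True] .
        have b: "\<tau> (q (Suc n)) (p n) > 0" using a True by order
        have "\<tau> (q (Suc n)) (p (Suc n)) \<ge> \<tau> (q (Suc n)) (p n)" using rt1(1)[OF b pc] .
        then show ?thesis using a by order
      qed simp
    qed
    have "(\<lambda>n. \<tau> (q n) (p n)) \<longlonglongrightarrow> (SUP n. \<tau> (q n) (p n))"
      using inc by (rule LIMSEQ_SUP)
    then have lim: "lim (\<lambda>n. \<tau> (q n) (p n)) = (SUP n. \<tau> (q n) (p n))"
      by (rule limI)
    have "(SUP n. \<tau> (q n) (p n)) > 0 \<longleftrightarrow> (\<exists>n. \<tau> (q n) (p n) > 0)"
      by (simp add: less_SUP_iff)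
    also have "\<dots> \<longleftrightarrow> F \<inter> P' \<noteq> {}"
    proof
      assume "\<exists>n. \<tau> (q n) (p n) > 0"
      then obtain n where n: "\<tau> (q n) (p n) > 0" by blast
      have "p n \<in> F" using q(2) n unfolding IfutS_def Ifut_def chron_def by blast
      moreover have "p n \<in> P'" using p(2) pc[of n] unfolding IpastS_def Ipast_def chron_def by blast
      ultimately show "F \<inter> P' \<noteq> {}" by blast
    next
      assume "F \<inter> P' \<noteq> {}"
      then obtain x where x: "x \<in> F" "x \<in> P'" by blast
      obtain n where n: "chron \<tau> (q n) x" using x(1) q(2) unfolding IfutS_def Ifut_def by blast
      obtain m where m: "chron \<tau> x (p m)" using x(2) p(2) unfolding IpastS_def Ipast_def by blast
      have qd: "chron \<tau> (q (k + n)) (q n) \<or> k = 0" for k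
      proof (induction k)
        case (Suc k)
        then show ?case using q(1) trans unfolding past_chain_def
          by (metis add_Suc add_0)
      qed simp
      have pd: "chron \<tau> (p m) (p (k + m)) \<or> k = 0" for k
      proof (induction k)
        case (Suc k)
        then show ?case using p(1) trans unfolding future_chain_def
          by (metis add_Suc add_0)
      qed simp
      define K where "K = max n m"
      have "chron \<tau> (q K) x"
        using qd[of "K - n"] n trans unfolding K_def by (metis le_add_diff_inverse2 max.cobounded1 diff_self_eq_0 add_0)
      moreover have "chron \<tau> x (p K)"
        using pd[of "K - m"] m trans unfolding K_def by (metis le_add_diff_inverse2 max.cobounded2 diff_self_eq_0 add_0)
      ultimately have "chron \<tau> (q K) (p K)" using trans by blast
      then show "\<exists>n. \<tau> (q n) (p n) > 0" unfolding chron_def by blast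
    qed
    finally show ?thesis using tb lim by simp
  qed
qed

end
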